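(* Let $(X,T)$ be a minimal Cantor system, $p\geq 1$ and $U\subseteq X$ clopen. Then for all $x,y\in X$, $$\mathrm{PS}_p(x,U)=\emptyset \iff \mathrm{PS}_p(y,U)=\emptyset .$$
   Context: A minimal Cantor system is a pair $(X,T)$ where $X$ is a Cantor space, $T:X\to X$ a homeomorphism, and every orbit $\{T^n x : n\in\mathbb Z\}$ is dense in $X$. For $x\in X$, a clopen $U\subseteq X$ and an integer $p\geq 1$, $\mathrm{PS}_p(x,U)=\{k\in\mathbb Z : T^{k+np}x\in U \text{ for all } n\in\mathbb Z\}$. *)

theory Defs
  imports "HOL-Analysis.Analysis"
begin

definition cantor_space :: "'a topology \<Rightarrow> bool" where
  "cantor_space X \<longleftrightarrow>
     X homeomorphic_space product_topology (\<lambda>_::nat. discrete_topology {0::nat, 1}) UNIV"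

definition zpow :: "'a topology \<Rightarrow> ('a \<Rightarrow> 'a) \<Rightarrow> int \<Rightarrow> 'a \<Rightarrow> 'a" where
  "zpow X T n = (if n \<ge> 0 then T ^^ nat n else (inv_into (topspace X) T) ^^ nat (- n))"

definition minimal_cantor_system :: "'a topology \<Rightarrow> ('a \<Rightarrow> 'a) \<Rightarrow> bool" where
  "minimal_cantor_system X T \<longleftrightarrow>
     cantor_space X \<and> homeomorphic_map X X T \<and>
     (\<forall>x \<in> topspace X. X closure_of {zpow X T n x | n. True} = topspace X)"

definition PS :: "'a topology \<Rightarrow> ('a \<Rightarrow> 'a) \<Rightarrow> nat \<Rightarrow> 'a \<Rightarrow> 'a set \<Rightarrow> int set" where
  "PS X T p x U = {k. \<forall>n::int. zpow X T (k + n * int p) x \<in> U}"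

end

theory Submission
  imports Defs
begin

lemma hm_basic:
  assumes "homeomorphic_map X X T"
  shows "continuous_map X X T" "continuous_map X X (inv_into (topspace X) T)"
    "\<And>z. z \<in> topspace X \<Longrightarrow> inv_into (topspace X) T (T z) = z"
    "\<And>z. z \<in> topspace X \<Longrightarrow> T (inv_into (topspace X) T z) = z"
proof -
  obtain g where g: "homeomorphic_maps X X T g" using assms homeomorphic_map_maps by blast
  hence c: "continuous_map X X T" "continuous_map X X g"
    and l: "\<forall>x\<in>topspace X. g (T x) = x" and r: "\<forall>y\<in>topspace X. T (g y) = y"
    by (auto simp: homeomorphic_maps_def)
  have inj: "inj_on T (topspace X)" by (metis l inj_onI)
  have Tin: "\<And>z. z \<in> topspace X \<Longrightarrow> T z \<in> topspace X" using c(1)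
    unfolding continuous_map_def by blast
  have gin: "\<And>z. z \<in> topspace X \<Longrightarrow> g z \<in> topspace X" using c(2)
    unfolding continuous_map_def by blast
  show li: "\<And>z. z \<in> topspace X \<Longrightarrow> inv_into (topspace X) T (T z) = z"
    using inj by simp
  have eq: "\<And>z. z \<in> topspace X \<Longrightarrow> g z = inv_into (topspace X) T z"
    by (metis gin li r)
  show "continuous_map X X T" by (rule c(1))
  show "continuous_map X X (inv_into (topspace X) T)" using continuous_map_eq[OF c(2) eq] .
  show "\<And>z. z \<in> topspace X \<Longrightarrow> T (inv_into (topspace X) T z) = z"
    using eq r by metis
qed

lemma funpow_cont: "continuous_map X X f \<Longrightarrow> continuous_map X X (f ^^ n)"
  by (induction n) (auto intro: continuous_map_compose)

lemma zpow_cont: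
  assumes "homeomorphic_map X X T"
  shows "continuous_map X X (zpow X T n)"
  using hm_basic[OF assms] funpow_cont unfolding zpow_def by auto

lemma zpow_in:
  assumes "homeomorphic_map X X T" "z \<in> topspace X"
  shows "zpow X T n z \<in> topspace X"
  using zpow_cont[OF assms(1), of n] assms(2) unfolding continuous_map_def by blast

lemma zpow_step:
  assumes h: "homeomorphic_map X X T" and z: "z \<in> topspace X"
  shows "zpow X T (a + 1) z = T (zpow X T a z)"
proof (cases "a \<ge> 0")
  case True
  then have "nat (a+1) = Suc (nat a)" by simp
  then show ?thesis using True by (simp add: zpow_def)
next
  case False
  let ?S = "inv_into (topspace X) T"
  have "nat (-a) = Suc (nat (-(a+1)))" using False by simp
  then have "zpow X T a z = ?S (zpow X T (a+1) z)"
    using False by (simp add: zpow_def)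
  then show ?thesis using hm_basic(4)[OF h] zpow_in[OF h z] by simp
qed

lemma zpow_zero: "zpow X T 0 z = z" by (simp add: zpow_def)

lemma zpow_add:
  assumes h: "homeomorphic_map X X T" and z: "z \<in> topspace X"
  shows "zpow X T (a + b) z = zpow X T a (zpow X T b z)"
proof (induction a rule: int_induct[where k=0])
  case base
  then show ?case by (simp add: zpow_zero)
next
  case (step1 i)
  have "zpow X T (i + 1 + b) z = T (zpow X T (i + b) z)"
    using zpow_step[OF h z, of "i+b"] by (simp add: algebra_simps)
  also have "\<dots> = T (zpow X T i (zpow X T b z))" using step1 by simp
  also have "\<dots> = zpow X T (i+1) (zpow X T b z)"
    using zpow_step[OF h zpow_in[OF h z]] by simp
  finally show ?case .
next
  case (step2 i)
  let ?S = "inv_into (topspace X) T"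
  have "zpow X T (i + b) z = T (zpow X T (i - 1 + b) z)"
    using zpow_step[OF h z, of "i-1+b"] by (simp add: algebra_simps)
  hence 1: "zpow X T (i - 1 + b) z = ?S (zpow X T (i + b) z)"
    using hm_basic(3)[OF h] zpow_in[OF h z] by metis
  have "zpow X T i (zpow X T b z) = T (zpow X T (i - 1) (zpow X T b z))"
    using zpow_step[OF h zpow_in[OF h z], of "i-1"] by simp
  hence 2: "zpow X T (i - 1) (zpow X T b z) = ?S (zpow X T i (zpow X T b z))"
    using hm_basic(3)[OF h] zpow_in[OF h zpow_in[OF h z]] by metis
  show ?case using 1 2 step2 by simp
qed

lemma PS_reduce:
  assumes "p \<ge> 1"
  shows "PS X T p z U \<noteq> {} \<longleftrightarrow> (\<exists>j\<in>{0..<int p}. \<forall>n. zpow X T (j + n * int p) z \<in> U)"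
proof
  assume "PS X T p z U \<noteq> {}"
  then obtain k where k: "\<forall>n::int. zpow X T (k + n * int p) z \<in> U" unfolding PS_def by auto
  have "\<forall>n. zpow X T (k mod int p + n * int p) z \<in> U"
  proof
    fix n :: int
    have "k mod int p + n * int p = k + (n - k div int p) * int p"
      by (simp add: algebra_simps minus_div_mult_eq_mod[symmetric])
    thus "zpow X T (k mod int p + n * int p) z \<in> U" using k by metis
  qed
  moreover have "k mod int p \<in> {0..<int p}" using assms by simp
  ultimately show "\<exists>j\<in>{0..<int p}. \<forall>n. zpow X T (j + n * int p) z \<in> U" by blast
next
  assume "\<exists>j\<in>{0..<int p}. \<forall>n. zpow X T (j + n * int p) z \<in> U"
  then show "PS X T p z U \<noteq> {}" unfolding PS_def by blast
qed

lemma main_dir: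
  assumes m: "minimal_cantor_system X T" and p: "p \<ge> 1"
    and U: "closedin X U"
    and x: "x \<in> topspace X" and y: "y \<in> topspace X"
    and ne: "PS X T p x U \<noteq> {}"
  shows "PS X T p y U \<noteq> {}"
proof -
  have h: "homeomorphic_map X X T" using m by (simp add: minimal_cantor_system_def)
  define B where "B = {z \<in> topspace X. PS X T p z U \<noteq> {}}"
  have B_eq: "B = (\<Union>j\<in>{0..<int p}. \<Inter>n\<in>UNIV. {z \<in> topspace X. zpow X T (j + n * int p) z \<in> U})"
    unfolding B_def PS_reduce[OF p] by auto
  have "closedin X B" unfolding B_eq
    apply (rule closedin_Union)
     apply simp
    apply clarify
    apply (rule closedin_Inter)
     apply simp
    apply clarify
    apply (rule closedin_continuous_map_preimage[OF zpow_cont[OF h] U])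
    done
  moreover have "{zpow X T n x | n. True} \<subseteq> B"
  proof clarify
    fix n
    obtain k where k: "\<forall>m::int. zpow X T (k + m * int p) x \<in> U" using ne unfolding PS_def by auto
    have "\<forall>m::int. zpow X T (k - n + m * int p) (zpow X T n x) \<in> U"
    proof
      fix m :: int
      have "zpow X T (k - n + m * int p) (zpow X T n x) = zpow X T (k - n + m * int p + n) x"
        using zpow_add[OF h x, of "k - n + m * int p" n] by simp
      also have "\<dots> = zpow X T (k + m * int p) x" by (simp add: algebra_simps)
      finally show "zpow X T (k - n + m * int p) (zpow X T n x) \<in> U" using k by simp
    qed
    then show "zpow X T n x \<in> B" unfolding B_def PS_def using zpow_in[OF h x] by blast
  qed
  ultimately have "X closure_of {zpow X T n x | n. True} \<subseteq> B"
    by (rule closure_of_minimal[rotated])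
  then have "topspace X \<subseteq> B" using m x by (simp add: minimal_cantor_system_def)
  then show ?thesis using y B_def by auto
qed

theorem mainTheorem2:
  fixes X :: "'a topology" and T :: "'a \<Rightarrow> 'a" and p :: nat and U :: "'a set"
  assumes "minimal_cantor_system X T"
    and "p \<ge> 1"
    and "closedin X U" and "openin X U"
    and "x \<in> topspace X" and "y \<in> topspace X"
  shows "PS X T p x U = {} \<longleftrightarrow> PS X T p y U = {}"
  using main_dir[OF assms(1,2,3,5,6)] main_dir[OF assms(1,2,3,6,5)] by blast

end
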